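(* For every non-negative integer $n$, \[ \sum_{k=0}^{n}(-1)^{k}\frac{2^{2k}}{2k+1}\frac{\binom{n}{k}}{\binom{2k}{k}}=\frac{1}{2n+1} \qquad\text{and}\qquad \sum_{k=0}^{n}(-1)^{k+1}2^{2k}\frac{k}{2k+1}\frac{\binom{n}{k}}{\binom{2k}{k}}=\frac{2n}{(2n+1)(2n-1)}. \] *)

theory Defs
  imports Complex_Main
begin

end

theory Submission
  imports Defs
begin

lemma cb_nat: "((2*k+2) choose (k+1)) * (k + 1) = 2*(2*k+1) * ((2*k) choose k)"
proof -
  have e1: "Suc (2*k+1) * ((2*k+1) choose k) = (Suc (2*k+1) choose Suc k) * Suc k"
    by (rule Suc_times_binomial_eq)
  have e2: "Suc (2*k) * ((2*k) choose k) = (Suc (2*k) choose Suc k) * Suc k"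
    by (rule Suc_times_binomial_eq)
  have e3: "Suc k * (Suc (k + k) choose Suc k) = Suc k * (Suc (k + k) choose k)"
    by (rule Suc_times_binomial_add)
  have e4: "(Suc (k + k) choose Suc k) = (Suc (k + k) choose k)"
    using e3 by (metis mult_left_cancel nat.distinct(1))
  have "((2*k+2) choose (k+1)) * (k + 1) * (k+1) = (2*k+2) * ((2*k+1) choose k) * (k+1)"
    using e1 by (simp add: mult_2 algebra_simps)
  also have "... = (2*k+2) * (Suc (2*k) choose Suc k) * Suc k"
    using e4 by (simp add: mult_2)
  also have "... = (2*k+2) * (Suc (2*k) * ((2*k) choose k))"
    using e2 by (simp only: mult.assoc)
  also have "... = 2*(2*k+1) * ((2*k) choose k) * (k+1)"
    by (simp add: algebra_simps)
  finally have h: "((2*k+2) choose (k+1)) * (k + 1) * (k+1) = 2*(2*k+1) * ((2*k) choose k) * (k+1)" .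
  show ?thesis using h by (metis Suc_eq_plus1 mult_right_cancel nat.distinct(1))
qed

definition I :: "nat \<Rightarrow> real" where
  "I k = 4^k / ((2*real k + 1) * real ((2*k) choose k))"

lemma I_aux:
  fixes C D k x :: real
  assumes "D*(k+1) = 2*(2*k+1)*C" "C > 0" "k \<ge> 0" "D > 0"
  shows "4*x/((2*(k+1)+1)*D)*(2*k+3) = x/((2*k+1)*C)*(2*k+2)"
proof -
  have hD: "D = 2*(2*k+1)*C/(k+1)" using assms(1,3) by (simp add: field_simps)
  have n1: "(2*k+1)*C \<noteq> 0" using assms(2,3) by simp
  have n2: "(2*(k+1)+1)*D \<noteq> 0" using assms(3,4) by simp
  have "4*x/((2*(k+1)+1)*D)*(2*k+3) = 4*x*(2*k+3)/((2*(k+1)+1)*D)" by simp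
  also have "... = 4*x/D"
  proof -
    have e: "(2*(k+1)+1)*D = (2*k+3)*D" by (simp add: algebra_simps)
    have ne: "2*k+3 \<noteq> 0" using assms(3) by simp
    have "4*x*(2*k+3) = (2*k+3)*(4*x)" by simp
    then show ?thesis unfolding e using nonzero_mult_divide_mult_cancel_left[OF ne, of "4*x" D]
      by metis
  qed
  also have "... = x/((2*k+1)*C)*(2*k+2)" unfolding hD using assms(2,3) n1
    by (simp add: field_simps)
  finally show ?thesis .
qed

lemma I_Suc: "I (Suc k) * (2*real k + 3) = I k * (2*real k + 2)"
proof -
  have c: "real ((2*k+2) choose (k+1)) * (real k + 1) = 2*(2*real k+1) * real ((2*k) choose k)"
  proof -
    have "real (((2*k+2) choose (k+1)) * (k+1)) = real (2*(2*k+1) * ((2*k) choose k))"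
      by (simp only: cb_nat)
    then show ?thesis by (simp only: of_nat_mult of_nat_add of_nat_numeral of_nat_1)
  qed
  have p: "real ((2*k) choose k) > 0" by simp
  have p2: "real ((2*k+2) choose (k+1)) > 0" by (simp del: binomial_Suc_Suc)
  have e: "2 * Suc k = 2*k+2" by simp
  have "I (Suc k) = 4 * 4^k / ((2*(real k+1)+1) * real ((2*k+2) choose (k+1)))"
    unfolding I_def e by simp
  then show ?thesis unfolding I_def
    using I_aux[OF c p _ p2, of "4^k"] by simp
qed

fun P :: "nat \<Rightarrow> nat \<Rightarrow> real" where
  "P 0 m = I m"
| "P (Suc n) m = P n m * (2*real n + 1) / (2*real n + 2*real m + 3)"

lemma P_Suc_m: "P n (Suc m) * (2*real n + 2*real m + 3) = P n m * (2*real m + 2)"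
proof (induction n)
  case 0
  then show ?case using I_Suc[of m] by simp
next
  case (Suc n)
  have d: "2*real n + 2*real (Suc m) + 3 \<noteq> 0" "2*real n + 2*real m + 3 \<noteq> 0" by simp_all
  have a: "P (Suc n) (Suc m) * (2*real (Suc n) + 2*real m + 3) = P n (Suc m) * (2*real n + 1)"
    using d(1) by (simp add: field_simps)
  have b: "P n (Suc m) = P n m * (2*real m + 2) / (2*real n + 2*real m + 3)"
    using Suc d(2) by (simp add: field_simps)
  have c: "P (Suc n) m = P n m * (2*real n + 1) / (2*real n + 2*real m + 3)" by simp
  show ?case unfolding a b c by (simp add: field_simps)
qed

lemma choose_sum_Suc:
  "(\<Sum>k\<le>Suc n. real (Suc n choose k) * f k) =
   (\<Sum>k\<le>n. real (n choose k) * f k) + (\<Sum>k\<le>n. real (n choose k) * f (Suc k))"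
proof -
  have "(\<Sum>k\<le>Suc n. real (Suc n choose k) * f k) =
        f 0 + (\<Sum>k\<le>n. real (Suc n choose Suc k) * f (Suc k))"
    by (subst sum.atMost_Suc_shift) simp
  also have "... = f 0 + (\<Sum>k\<le>n. real (n choose Suc k) * f (Suc k)) + (\<Sum>k\<le>n. real (n choose k) * f (Suc k))"
    by (simp add: sum.distrib algebra_simps)
  also have "f 0 + (\<Sum>k\<le>n. real (n choose Suc k) * f (Suc k)) = (\<Sum>k\<le>Suc n. real (n choose k) * f k)"
    by (subst sum.atMost_Suc_shift) simp
  also have "... = (\<Sum>k\<le>n. real (n choose k) * f k)"
    by simp
  finally show ?thesis .
qed

lemma T_eq: "(\<Sum>k\<le>n. real (n choose k) * ((-1)^k * I (k + m))) = P n m"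
proof (induction n arbitrary: m)
  case 0
  then show ?case by simp
next
  case (Suc n)
  have "(\<Sum>k\<le>Suc n. real (Suc n choose k) * ((-1)^k * I (k + m))) =
     (\<Sum>k\<le>n. real (n choose k) * ((-1)^k * I (k + m))) + (\<Sum>k\<le>n. real (n choose k) * ((-1)^Suc k * I (Suc k + m)))"
    by (rule choose_sum_Suc)
  also have "(\<Sum>k\<le>n. real (n choose k) * ((-1)^Suc k * I (Suc k + m))) =
      - (\<Sum>k\<le>n. real (n choose k) * ((-1)^k * I (k + Suc m)))"
    by (simp add: sum_negf[symmetric])
  also have "(\<Sum>k\<le>n. real (n choose k) * ((-1)^k * I (k + m))) + - (\<Sum>k\<le>n. real (n choose k) * ((-1)^k * I (k + Suc m))) = P n m - P n (Suc m)"
    by (simp only: Suc.IH)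
  also have "... = P (Suc n) m"
  proof -
    have "P n (Suc m) = P n m * (2*real m + 2) / (2*real n + 2*real m + 3)"
      using P_Suc_m[of n m] by (simp add: field_simps)
    then show ?thesis by (simp add: field_simps)
  qed
  finally show ?case .
qed

lemma P0: "P n 0 = 1 / (2*real n + 1)"
  by (induction n) (simp_all add: I_def field_simps)

theorem corollary28:
  fixes n :: nat
  shows "((\<Sum>k=0..n. (-1::real)^k * (2^(2*k) / (2*real k + 1)) * (real (n choose k) / real ((2*k) choose k)))
           = 1 / (2*real n + 1)) \<and>
         ((\<Sum>k=0..n. (-1::real)^(k+1) * 2^(2*k) * (real k / (2*real k + 1)) * (real (n choose k) / real ((2*k) choose k)))
           = 2*real n / ((2*real n + 1) * (2*real n - 1)))"
proof
  have t: "(-1::real)^k * (2^(2*k) / (2*real k + 1)) * (real (n choose k) / real ((2*k) choose k))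
     = real (n choose k) * ((-1)^k * I (k + 0))" for k
    by (simp add: I_def power_mult)
  have "(\<Sum>k=0..n. (-1::real)^k * (2^(2*k) / (2*real k + 1)) * (real (n choose k) / real ((2*k) choose k)))
     = (\<Sum>k\<le>n. real (n choose k) * ((-1)^k * I (k + 0)))"
    by (simp only: t atLeast0AtMost)
  then show "(\<Sum>k=0..n. (-1::real)^k * (2^(2*k) / (2*real k + 1)) * (real (n choose k) / real ((2*k) choose k)))
           = 1 / (2*real n + 1)" using T_eq[of n 0] P0[of n] by simp
next
  show "(\<Sum>k=0..n. (-1::real)^(k+1) * 2^(2*k) * (real k / (2*real k + 1)) * (real (n choose k) / real ((2*k) choose k)))
           = 2*real n / ((2*real n + 1) * (2*real n - 1))"
  proof (cases n)
    case 0
    then show ?thesis by simp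
  next
    case (Suc m)
    have t: "(-1::real)^(k+1) * 2^(2*k) * (real k / (2*real k + 1)) * (real (n choose k) / real ((2*k) choose k))
       = - real k * real (n choose k) * ((-1)^k * I k)" for k
      by (simp add: I_def power_mult)
    have "(\<Sum>k=0..n. (-1::real)^(k+1) * 2^(2*k) * (real k / (2*real k + 1)) * (real (n choose k) / real ((2*k) choose k)))
       = (\<Sum>k\<le>n. - real k * real (n choose k) * ((-1)^k * I k))"
      by (simp only: atLeast0AtMost t)
    also have "... = (\<Sum>k\<le>Suc m. - real k * real (Suc m choose k) * ((-1)^k * I k))"
      by (simp only: Suc)
    also have "... = (\<Sum>k\<le>m. - real (Suc k) * real (Suc m choose Suc k) * ((-1)^Suc k * I (Suc k)))"
      by (subst sum.atMost_Suc_shift) simp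
    also have "... = (\<Sum>k\<le>m. real (Suc m) * (real (m choose k) * ((-1)^k * I (k + 1))))"
    proof (rule sum.cong[OF refl])
      fix k
      have "real (Suc k) * real (Suc m choose Suc k) = real (Suc m) * real (m choose k)"
        using arg_cong[OF Suc_times_binomial[of k m], of real] by (simp only: of_nat_mult)
      then show "- real (Suc k) * real (Suc m choose Suc k) * ((-1)^Suc k * I (Suc k))
          = real (Suc m) * (real (m choose k) * ((-1)^k * I (k + 1)))"
        by (simp add: algebra_simps)
    qed
    also have "... = real (Suc m) * P m 1"
      using T_eq[of m 1] by (subst sum_distrib_left[symmetric]) simp
    also have "... = 2 * real n / ((2*real n + 1) * (2*real n - 1))"
    proof -
      have "P m 1 = P m 0 * 2 / (2*real m + 3)"
        using P_Suc_m[of m 0] by (simp add: field_simps)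
      then show ?thesis using P0[of m] Suc by (simp add: field_simps)
    qed
    finally show ?thesis .
  qed
qed

end
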